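(* Let $d=2$. There is a constant $c_2$ depending only on the dimension such that for all $N\ge2$, $$\text{i) } E_Q(Z(N)^2)\le \sum_{n=0}^N\left(c_2c^2_{N,2}\log N\right)^n,\qquad \text{ii) } E_Q(K(N)^2)\le N^2\sum_{n=0}^N\left(c_2c^2_{N,2}\log N\right)^n.$$
   Context: $P^N_0$ is the uniform probability measure on nearest-neighbour walks $\omega:\{0,\dots,N\}\to\mathbb{Z}^2$ with $\omega(0)=0$, $|\omega(n)-\omega(n-1)|=1$ (each of weight $4^{-N}$). The environment $h=\{h(n,x):n\in\mathbb{N},x\in\mathbb{Z}^2\}$ consists of i.i.d. random variables with $h(n,x)=\pm1$ each with probability $1/2$ on a probability space $(H,\mathcal{G},Q)$, independent of the walk; $E_Q$ is expectation under $Q$. $(c_{N,2})$ is a sequence of positive numbers with $\lim_{N\to\infty}c_{N,2}^2\log N=0$. $Z(N)=\int\prod_{n=1}^N[1+c_{N,2}h(n,\omega(n))]\,dP^N_0(\omega)$ and $K(N)=\int\prod_{n=1}^N[1+c_{N,2}h(n,\omega(n))]\,|\omega(N)|^2\,dP^N_0(\omega)$. *)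

theory Defs
  imports "HOL-Probability.Probability"
begin

text \<open>Nearest-neighbour walks of length N in Z^2 started at 0, as functions
  on nat, normalised to (0,0) after time N so that the set is finite.\<close>
definition walks :: "nat \<Rightarrow> (nat \<Rightarrow> int \<times> int) set" where
  "walks N = {w. w 0 = (0,0)
     \<and> (\<forall>n\<in>{1..N}. (fst (w n) - fst (w (n-1)))^2 + (snd (w n) - snd (w (n-1)))^2 = 1)
     \<and> (\<forall>n>N. w n = (0,0))}"

text \<open>Environment: a configuration h(n,x) = eta (n,x).  Q is the product of
  uniform measures on {-1,1} over all sites (n,x) (canonical i.i.d. realisation).\<close>
definition Qenv :: "(nat \<times> (int \<times> int) \<Rightarrow> real) measure" where
  "Qenv = PiM UNIV (\<lambda>_. measure_pmf (pmf_of_set {-1, 1::real}))"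

text \<open>Z(N) and K(N): integrals against the uniform measure P^N_0 (weight 4^(-N)).\<close>
definition Zpart :: "(nat \<Rightarrow> real) \<Rightarrow> nat \<Rightarrow> (nat \<times> (int \<times> int) \<Rightarrow> real) \<Rightarrow> real" where
  "Zpart c N eta = (\<Sum>w\<in>walks N. (\<Prod>n=1..N. 1 + c N * eta (n, w n)) / 4 ^ N)"

definition Kpart :: "(nat \<Rightarrow> real) \<Rightarrow> nat \<Rightarrow> (nat \<times> (int \<times> int) \<Rightarrow> real) \<Rightarrow> real" where
  "Kpart c N eta = (\<Sum>w\<in>walks N. (\<Prod>n=1..N. 1 + c N * eta (n, w n))
      * (real_of_int (fst (w N))^2 + real_of_int (snd (w N))^2) / 4 ^ N)"

end

theory Submission
  imports Defs
begin


definition S4 :: "(int\<times>int) set" where "S4 = {(1,0),(-1,0),(0,1),(0,-1)}"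

lemma sum_S4: "(\<Sum>s\<in>S4. f s) = f (1,0) + f (-1,0) + f (0,1) + f (0,-1)"
  by (simp add: S4_def add.assoc)

fun R :: "nat \<Rightarrow> int\<times>int \<Rightarrow> real" where
  "R 0 z = (if z = 0 then 1 else 0)"
| "R (Suc m) z = (\<Sum>s\<in>S4. \<Sum>s'\<in>S4. R m (z + s - s')) / 16"

fun rho :: "nat \<Rightarrow> int \<Rightarrow> real" where
  "rho 0 a = (if a = 0 then 1 else 0)"
| "rho (Suc m) a = (rho m (a+2) + 2 * rho m a + rho m (a-2)) / 4"

declare R.simps(2)[simp del] rho.simps(2)[simp del]

lemma R_Suc9: "R (Suc m) (p,q) * 16 = 2 * R m (p - 1, q - 1) +
     (2 * R m (p - 1, q + 1) +
      (4 * R m (p, q) +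
       (R m (2 + p, q) +
        (2 * R m (p + 1, q - 1) +
         (2 * R m (p + 1, q + 1) +
          (R m (p - 2, q) + (R m (p, 2 + q) + R m (p, q - 2))))))))"
  by (simp add: sum_S4 R.simps)

lemma R_rot: "R m (p,q) = rho m (p+q) * rho m (p-q)"
proof (induction m arbitrary: p q)
  case 0
  then show ?case by (auto simp: zero_prod_def)
next
  case (Suc m)
  define a where "a = p + q"
  define b where "b = p - q"
  have h1: "R m (p - 1, q - 1) = rho m (a - 2) * rho m b" unfolding a_def b_def Suc
    by (simp add: algebra_simps)
  have h2: "R m (p - 1, q + 1) = rho m a * rho m (b - 2)" unfolding a_def b_def Suc
    by (simp add: algebra_simps)
  have h3: "R m (p, q) = rho m a * rho m b" unfolding a_def b_def Suc by simp
  have h4: "R m (2 + p, q) = rho m (a + 2) * rho m (b + 2)" unfolding a_def b_def Suc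
    by (simp add: algebra_simps)
  have h5: "R m (p + 1, q - 1) = rho m a * rho m (b + 2)" unfolding a_def b_def Suc
    by (simp add: algebra_simps)
  have h6: "R m (p + 1, q + 1) = rho m (a + 2) * rho m b" unfolding a_def b_def Suc
    by (simp add: algebra_simps)
  have h7: "R m (p - 2, q) = rho m (a - 2) * rho m (b - 2)" unfolding a_def b_def Suc
    by (simp add: algebra_simps)
  have h8: "R m (p, 2 + q) = rho m (a + 2) * rho m (b - 2)" unfolding a_def b_def Suc
    by (simp add: algebra_simps)
  have h9: "R m (p, q - 2) = rho m (a - 2) * rho m (b + 2)" unfolding a_def b_def Suc
    by (simp add: algebra_simps)
  have "R (Suc m) (p,q) * 16 = rho (Suc m) a * rho (Suc m) b * 16"
    unfolding R_Suc9 h1 h2 h3 h4 h5 h6 h7 h8 h9 rho.simps(2)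
    by (simp add: algebra_simps)
  then show ?case unfolding a_def b_def by simp
qed

lemma choose_SS: "(Suc (Suc n) choose Suc (Suc k)) = (n choose k) + 2*(n choose Suc k) + (n choose Suc (Suc k))"
  by simp

lemma rho_closed: "rho m (2*j) = (if j < - int m then 0 else real (2*m choose nat (int m + j)) / 4^m)"
proof (induction m arbitrary: j)
  case 0
  then show ?case by auto
next
  case (Suc m)
  have e1: "2*j+2 = 2*(j+1)" "2*j - 2 = 2*(j-1)" by auto
  have rr: "rho (Suc m) (2*j) = (rho m (2*(j+1)) + 2 * rho m (2*j) + rho m (2*(j-1))) / 4"
    by (simp only: rho.simps(2) e1)
  consider "j < - int m - 1" | "j = - int m - 1" | "j = - int m" | "j > - int m" by linarith
  then show ?case
  proof cases
    case 1 then show ?thesis unfolding rr Suc by simp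
  next
    case 2
    have "nat (int (Suc m) + j) = 0" "nat (int m + (j+1)) = 0" using 2 by auto
    then show ?thesis unfolding rr Suc using 2 by simp
  next
    case 3
    have "nat (int (Suc m) + j) = 1" "nat (int m + (j+1)) = 1" "nat (int m + j) = 0" using 3 by auto
    then show ?thesis unfolding rr Suc using 3 by (simp add: field_simps)
  next
    case 4
    define k where "k = nat (int m + j) - 1"
    have k1: "nat (int (Suc m) + j) = Suc (Suc k)" "nat (int m + (j+1)) = Suc (Suc k)"
      "nat (int m + j) = Suc k" "nat (int m + (j-1)) = k" using 4 by (auto simp: k_def)
    have "real (2 * Suc m choose Suc (Suc k)) = real (2*m choose k) + 2 * real (2*m choose Suc k) + real (2*m choose Suc (Suc k))"
      using choose_SS[of "2*m" k] by (simp del: binomial_Suc_Suc)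
    then show ?thesis unfolding rr Suc using 4 k1 by (simp add: field_simps)
  qed
qed

lemma rho0: "rho m 0 = real (2*m choose m) / 4^m"
  using rho_closed[of m 0] by simp

lemma cb: "(2*Suc m choose Suc m) * Suc m = 2*(2*m+1)*(2*m choose m)"
proof -
  have a: "Suc (2*m+1) * (2*m+1 choose m) = (Suc (2*m+1) choose Suc m) * Suc m"
    by (rule Suc_times_binomial_eq)
  have b: "Suc (2*m) * (2*m choose m) = (Suc (2*m) choose Suc m) * Suc m"
    by (rule Suc_times_binomial_eq)
  have c: "(2*m+1 choose m) = (2*m+1 choose Suc m)"
    using binomial_symmetric[of m "2*m+1"] by (simp add: Suc_diff_le)
  have e: "Suc (2*m+1) = 2*Suc m" "Suc (2*m) = 2*m+1" by auto
  define X where "X = (2*Suc m choose Suc m)"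
  define Y where "Y = (2*m+1 choose m)"
  define Z where "Z = (2*m choose m)"
  have a': "X * Suc m = 2*Suc m * Y" using a unfolding e X_def Y_def by simp
  have b': "(2*m+1) * Z = Y * Suc m" using b c unfolding e Y_def Z_def by simp
  have "X * Suc m * Suc m = 2*Suc m * (Y * Suc m)" using a' by simp
  also have "\<dots> = 2 * Suc m * ((2*m+1) * Z)" using b' by simp
  finally have "X * Suc m * Suc m = (2*(2*m+1)* Z) * Suc m" by (simp add: algebra_simps)
  then have "X * Suc m = 2*(2*m+1)* Z" by (simp only: mult_right_cancel)
  then show ?thesis unfolding X_def Z_def by (simp only:)
qed

lemma rho0_Suc: "rho (Suc m) 0 = rho m 0 * (2*m+1) / (2*m+2)"
proof -
  obtain X Z where XZ: "X = (2*Suc m choose Suc m)" "Z = (2*m choose m)" by blast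
  have "real X * (m+1) = 2*(2*m+1) * real Z"
    using arg_cong[OF cb[of m], of real] unfolding XZ[symmetric] by (simp add: algebra_simps)
  then have "real X = 2*(2*m+1) * real Z / (m+1)"
    by (simp add: field_simps)
  moreover have rX: "rho (Suc m) 0 = real X / 4^Suc m" unfolding XZ by (rule rho0)
  moreover have rZ: "rho m 0 = real Z / 4^m" unfolding XZ by (rule rho0)
  ultimately have "rho (Suc m) 0 = 2*(2*m+1)*real Z/(m+1)/4^Suc m" by simp
  also have "\<dots> = real Z/4^m * (2*m+1)/(2*m+2)"
  proof -
    have "2*real m+2 = 2*(real m+1)" by simp
    then show ?thesis by (simp add: divide_simps) (simp add: algebra_simps)
  qed
  finally show ?thesis using rZ by simp
qed

lemma rho0_sq: "(rho m 0)^2 \<le> 1 / (2*real m+1)"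
proof (induction m)
  case 0 then show ?case by simp
next
  case (Suc m)
  have "(rho (Suc m) 0)^2 = (rho m 0)^2 * ((2*real m+1)/(2*real m+2))^2"
    unfolding rho0_Suc by (simp add: power_mult_distrib power_divide add.commute)
  also have "\<dots> \<le> 1 / (2*real m+1) * ((2*real m+1)/(2*real m+2))^2"
    by (rule mult_right_mono[OF Suc]) simp
  also have "\<dots> \<le> 1 / (2 * real (Suc m) + 1)"
  proof -
    have p: "(0::real) < 2*real m+1" "(0::real) < 2*real m+2" by auto
    have "1 / (2*real m+1) * ((2*real m+1)/(2*real m+2))^2 = (2*real m+1)/((2*real m+2)*(2*real m+2))"
      using p by (simp add: power2_eq_square divide_simps)
    also have "\<dots> \<le> 1 / (2 * real (Suc m) + 1)"
      using p by (simp add: divide_simps) (simp add: algebra_simps)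
    finally show ?thesis .
  qed
  finally show ?case .
qed

lemma R0_bound: "R (Suc m) 0 \<le> 1 / (real m+1)"
proof -
  have "R (Suc m) 0 = (rho (Suc m) 0)^2" using R_rot[of "Suc m" 0 0]
    by (simp only: zero_prod_def power2_eq_square) simp
  also have "\<dots> \<le> 1 / (2 * real (Suc m) + 1)" by (rule rho0_sq)
  also have "\<dots> \<le> 1 / (real m+1)" by (simp add: field_simps)
  finally show ?thesis .
qed

lemma R_nonneg: "R m z \<ge> 0"
  by (induction m arbitrary: z) (auto simp: R.simps intro!: sum_nonneg)

definition TD :: "real \<Rightarrow> (int\<times>int \<Rightarrow> real) \<Rightarrow> int\<times>int \<Rightarrow> real" where
  "TD t g z = (\<Sum>s\<in>S4. \<Sum>s'\<in>S4. (1 + t * (if z + s - s' = 0 then 1 else 0)) * g (z + s - s')) / 16"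

definition Aw :: "real \<Rightarrow> nat \<Rightarrow> int\<times>int \<Rightarrow> real" where
  "Aw t n = (TD t ^^ n) (\<lambda>_. 1)"

lemma Aw_Suc: "Aw t (Suc n) z = TD t (Aw t n) z"
  by (simp add: Aw_def)

lemma card_S4: "card S4 = 4" by (simp add: S4_def)

lemma card16: "(\<Sum>s\<in>S4. \<Sum>s'\<in>S4. (1::real)) = 16"
  by (simp add: S4_def)

lemma renewal: "Aw t n z = 1 + t * (\<Sum>m<n. R (Suc m) z * Aw t (n - Suc m) 0)"
proof (induction n arbitrary: z)
  case 0
  then show ?case by (simp add: Aw_def)
next
  case (Suc n)
  let ?F = "\<lambda>m. Aw t (n - Suc m) 0"
  have split: "(1 + t * (if z + s - s' = 0 then 1 else 0)) * Aw t n (z + s - s')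
      = Aw t n (z + s - s') + t * ((if z + s - s' = 0 then 1 else 0) * Aw t n 0)" for s s'
    by (auto simp: algebra_simps)
  have "Aw t (Suc n) z = (\<Sum>s\<in>S4. \<Sum>s'\<in>S4. Aw t n (z + s - s')) / 16
     + t * (((\<Sum>s\<in>S4. \<Sum>s'\<in>S4. (if z + s - s' = 0 then 1 else 0)) / 16) * Aw t n 0)"
    unfolding Aw_Suc TD_def split
    by (simp add: sum.distrib sum_distrib_left sum_distrib_right add_divide_distrib algebra_simps)
  also have "(\<Sum>s\<in>S4. \<Sum>s'\<in>S4. (if z + s - s' = 0 then 1 else 0)) / 16 = R 1 z"
    by (simp add: zero_prod_def R.simps)
  also have "(\<Sum>s\<in>S4. \<Sum>s'\<in>S4. Aw t n (z + s - s')) / 16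
      = (\<Sum>s\<in>S4. \<Sum>s'\<in>S4. 1 + t * (\<Sum>m<n. R (Suc m) (z + s - s') * ?F m)) / 16"
    using Suc by simp
  also have "\<dots> = 1 + t * (\<Sum>m<n. ((\<Sum>s\<in>S4. \<Sum>s'\<in>S4. R (Suc m) (z + s - s')) / 16) * ?F m)"
    by (simp add: sum.distrib sum_distrib_left sum_distrib_right card16 card_S4 add_divide_distrib
        sum_divide_distrib[symmetric] sum.swap[of _ S4 "{..<n}"] algebra_simps)
  also have "(\<lambda>m. ((\<Sum>s\<in>S4. \<Sum>s'\<in>S4. R (Suc m) (z + s - s')) / 16) * ?F m)
       = (\<lambda>m. R (Suc (Suc m)) z * ?F m)" by (simp add: R.simps)
  finally have "Aw t (Suc n) z = 1 + t * (\<Sum>m<n. R (Suc (Suc m)) z * ?F m) + t * (R 1 z * Aw t n 0)" .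
  moreover have "(\<Sum>m<Suc n. R (Suc m) z * Aw t (Suc n - Suc m) 0)
      = R 1 z * Aw t n 0 + (\<Sum>m<n. R (Suc (Suc m)) z * ?F m)"
    by (subst sum.lessThan_Suc_shift) simp
  ultimately show ?case by (simp add: algebra_simps)
qed




lemma TD_nonneg: "t \<ge> 0 \<Longrightarrow> (\<And>z. g z \<ge> 0) \<Longrightarrow> TD t g z \<ge> 0"
  unfolding TD_def by (intro divide_nonneg_pos sum_nonneg mult_nonneg_nonneg) auto

lemma TDn_nonneg: "t \<ge> 0 \<Longrightarrow> (\<And>z. g z \<ge> 0) \<Longrightarrow> (TD t ^^ n) g z \<ge> 0"
  by (induction n arbitrary: z) (auto intro!: TD_nonneg)

lemma Aw_nonneg: "t \<ge> 0 \<Longrightarrow> Aw t n z \<ge> 0"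
  unfolding Aw_def by (rule TDn_nonneg) auto

lemma geom_Suc: "(\<Sum>k\<le>Suc n. (x::real)^k) = 1 + x * (\<Sum>k\<le>n. x^k)"
  by (simp only: sum.atMost_Suc_shift power_Suc sum_distrib_left power_0)

lemma Aw_bound:
  assumes t: "t \<ge> 0" and nN: "n \<le> N"
  shows "Aw t n 0 \<le> (\<Sum>k\<le>n. (t * (\<Sum>m<N. 1/(real m+1)))^k)"
  using nN
proof (induction n rule: less_induct)
  case (less n)
  define H where "H = (\<Sum>m<N. 1/(real m+1))"
  define S where "S j = (\<Sum>k\<le>j. (t*H)^k)" for j
  have H0: "H \<ge> 0" unfolding H_def by (auto intro: sum_nonneg)
  have Smono: "S i \<le> S j" if "i \<le> j" for i j unfolding S_def
    by (rule sum_mono2) (use that t H0 in auto)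
  have S0: "S j \<ge> 0" for j unfolding S_def using t H0 by (auto intro!: sum_nonneg)
  show ?case
  proof (cases n)
    case 0 then show ?thesis by (simp add: Aw_def)
  next
    case (Suc n')
    have "Aw t n 0 = 1 + t * (\<Sum>m<n. R (Suc m) 0 * Aw t (n - Suc m) 0)" by (rule renewal)
    also have "\<dots> \<le> 1 + t * (\<Sum>m<n. (1/(real m+1)) * S n')"
    proof -
      have "(\<Sum>m<n. R (Suc m) 0 * Aw t (n - Suc m) 0) \<le> (\<Sum>m<n. (1/(real m+1)) * S n')"
      proof (rule sum_mono)
        fix m assume m: "m \<in> {..<n}"
        have "Aw t (n - Suc m) 0 \<le> S (n - Suc m)"
          unfolding S_def H_def using less.IH[of "n - Suc m"] m less.prems by auto
        also have "\<dots> \<le> S n'" using Smono Suc m by auto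
        finally have a: "Aw t (n - Suc m) 0 \<le> S n'" .
        show "R (Suc m) 0 * Aw t (n - Suc m) 0 \<le> 1/(real m+1) * S n'"
          by (rule mult_mono[OF R0_bound a]) (auto simp: Aw_nonneg t)
      qed
      then show ?thesis using t by (simp add: mult_left_mono)
    qed
    also have "\<dots> = 1 + t * (\<Sum>m<n. 1/(real m+1)) * S n'"
      by (simp add: sum_distrib_right mult.assoc)
    also have "\<dots> \<le> 1 + t * H * S n'"
    proof -
      have "(\<Sum>m<n. 1/(real m+1)) \<le> H" unfolding H_def
        by (rule sum_mono2) (use less.prems in auto)
      then show ?thesis using t S0[of n'] by (simp add: mult_left_mono mult_right_mono)
    qed
    also have "\<dots> = S n" using Suc geom_Suc by (simp add: S_def)
    finally show ?thesis unfolding S_def H_def .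
  qed
qed

definition T :: "real \<Rightarrow> (int\<times>int \<Rightarrow> int\<times>int \<Rightarrow> real) \<Rightarrow> int\<times>int \<Rightarrow> int\<times>int \<Rightarrow> real" where
  "T t f x y = (\<Sum>s\<in>S4. \<Sum>s'\<in>S4. (1 + t * (if x + s = y + s' then 1 else 0)) * f (x + s) (y + s')) / 16"

lemma eq_shift: "((x::int\<times>int) + s = y + s') = (x - y + (s - s') = 0)"
  by (metis (no_types, lifting) add_diff_add diff_add_cancel eq_iff_diff_eq_0 add.commute diff_diff_eq2)

lemma diff_shift: "((x::int\<times>int) + s) - (y + s') = x - y + (s - s')"
  by (simp add: algebra_simps)

lemma T_D: "T t (\<lambda>x y. g (x - y)) x y = TD t g (x - y)"
  unfolding T_def TD_def
  by (intro arg_cong[where f="\<lambda>a. a / 16"] sum.cong refl) (simp add: eq_shift diff_shift diff_diff_eq2 add_diff_eq)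

lemma Tn_D: "(T t ^^ n) (\<lambda>x y. g (x - y)) = (\<lambda>x y. (TD t ^^ n) g (x - y))"
proof (induction n)
  case (Suc n)
  show ?case by (rule ext, rule ext) (simp add: Suc T_D)
qed simp

lemma T_add: "T t (\<lambda>x y. f x y + g x y) x y = T t f x y + T t g x y"
  unfolding T_def by (simp add: sum.distrib algebra_simps add_divide_distrib)

lemma T_cmult: "T t (\<lambda>x y. c * f x y) x y = c * T t f x y"
  unfolding T_def by (simp add: sum_distrib_left algebra_simps)

lemma T_mono: "t \<ge> 0 \<Longrightarrow> (\<And>x y. f x y \<le> g x y) \<Longrightarrow> T t f x y \<le> T t g x y"
  unfolding T_def by (intro divide_right_mono sum_mono mult_left_mono) auto

lemma Tn_add: "(T t ^^ n) (\<lambda>x y. f x y + g x y) = (\<lambda>x y. (T t ^^ n) f x y + (T t ^^ n) g x y)"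
proof (induction n)
  case (Suc n)
  show ?case by (rule ext, rule ext) (simp add: Suc T_add)
qed simp

lemma Tn_cmult: "(T t ^^ n) (\<lambda>x y. c * f x y) = (\<lambda>x y. c * (T t ^^ n) f x y)"
proof (induction n)
  case (Suc n)
  show ?case by (rule ext, rule ext) (simp add: Suc T_cmult)
qed simp

lemma Tn_mono: "t \<ge> 0 \<Longrightarrow> (\<And>x y. f x y \<le> g x y) \<Longrightarrow> (T t ^^ n) f x y \<le> (T t ^^ n) g x y"
  by (induction n arbitrary: x y) (auto intro!: T_mono)



definition n2 :: "int\<times>int \<Rightarrow> real" where "n2 z = real_of_int (fst z)^2 + real_of_int (snd z)^2"
definition Lam :: "real \<Rightarrow> int\<times>int \<Rightarrow> real" where "Lam r U = (n2 U + 12*r)^2"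

lemma n2_nonneg: "n2 z \<ge> 0" unfolding n2_def by simp

lemma P0: "r \<ge> 0 \<Longrightarrow> Lam r (a + 2, b) + Lam r (a - 2, b) + Lam r (a, b + 2) + Lam r (a, b - 2) \<le> 4 * Lam (r+1) (a,b)"
proof -
  assume r: "r \<ge> 0"
  have "4 * Lam (r+1) (a,b) - (Lam r (a + 2, b) + Lam r (a - 2, b) + Lam r (a, b + 2) + Lam r (a, b - 2))
     = 32 * ((real_of_int a)^2 + (real_of_int b)^2) + 768 * r + 512"
    by (simp add: Lam_def n2_def power2_eq_square algebra_simps)
  moreover have "32 * ((real_of_int a)^2 + (real_of_int b)^2) + 768 * r + 512 \<ge> 0" using r by simp
  ultimately show ?thesis by linarith
qed

lemma P1: "r \<ge> 0 \<Longrightarrow> Lam r (a + 1, b + 1) + Lam r (a - 1, b - 1) \<le> 2 * Lam (r+1) (a,b)"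
proof -
  assume r: "r \<ge> 0"
  have "2 * Lam (r+1) (a,b) - (Lam r (a + 1, b + 1) + Lam r (a - 1, b - 1))
     = 8 * (real_of_int a - real_of_int b)^2 + 24 * ((real_of_int a)^2 + (real_of_int b)^2) + 480 * r + 280"
    by (simp add: Lam_def n2_def power2_eq_square algebra_simps)
  moreover have "8 * (real_of_int a - real_of_int b)^2 + 24 * ((real_of_int a)^2 + (real_of_int b)^2) + 480 * r + 280 \<ge> 0" using r by simp
  ultimately show ?thesis by linarith
qed

lemma P2: "r \<ge> 0 \<Longrightarrow> Lam r (a + 1, b - 1) + Lam r (a - 1, b + 1) \<le> 2 * Lam (r+1) (a,b)"
proof -
  assume r: "r \<ge> 0"
  have "2 * Lam (r+1) (a,b) - (Lam r (a + 1, b - 1) + Lam r (a - 1, b + 1))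
     = 8 * (real_of_int a + real_of_int b)^2 + 24 * ((real_of_int a)^2 + (real_of_int b)^2) + 480 * r + 280"
    by (simp add: Lam_def n2_def power2_eq_square algebra_simps)
  moreover have "8 * (real_of_int a + real_of_int b)^2 + 24 * ((real_of_int a)^2 + (real_of_int b)^2) + 480 * r + 280 \<ge> 0" using r by simp
  ultimately show ?thesis by linarith
qed

lemma P3: "r \<ge> 0 \<Longrightarrow> Lam r U \<le> Lam (r+1) U"
  unfolding Lam_def using n2_nonneg[of U] by (intro power_mono) auto

lemma grouping:
  assumes ph: "\<And>d. \<phi> d \<ge> 0" and r: "r \<ge> 0"
  shows "(\<Sum>s\<in>S4. \<Sum>s'\<in>S4. \<phi> (s - s') * Lam r ((a,b) + (s + s')))
     \<le> (\<Sum>s\<in>S4. \<Sum>s'\<in>S4. \<phi> (s - s')) * Lam (r+1) (a,b)"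
proof -
  let ?L = "Lam (r+1) (a,b)"
  have eqL: "(\<Sum>s\<in>S4. \<Sum>s'\<in>S4. \<phi> (s - s') * Lam r ((a,b) + (s + s'))) =
     \<phi> 0 * Lam r (a + 2, b) + \<phi> (2, 0) * Lam r (a, b) +
     \<phi> (1, - 1) * Lam r (a + 1, b + 1) +
     \<phi> (1, 1) * Lam r (a + 1, b - 1) +
     (\<phi> (- 2, 0) * Lam r (a, b) + \<phi> 0 * Lam r (a - 2, b) +
      \<phi> (- 1, - 1) * Lam r (a - 1, b + 1) +
      \<phi> (- 1, 1) * Lam r (a - 1, b - 1)) +
     (\<phi> (- 1, 1) * Lam r (a + 1, b + 1) + \<phi> (1, 1) * Lam r (a - 1, b + 1) +
      \<phi> 0 * Lam r (a, b + 2) +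
      \<phi> (0, 2) * Lam r (a, b)) +
     (\<phi> (- 1, - 1) * Lam r (a + 1, b - 1) +
      \<phi> (1, - 1) * Lam r (a - 1, b - 1) +
      \<phi> (0, - 2) * Lam r (a, b) +
      \<phi> 0 * Lam r (a, b - 2))"
    by (simp add: sum_S4)
  have eqR: "(\<Sum>s\<in>S4. \<Sum>s'\<in>S4. \<phi> (s - s')) * ?L =
     4 * (\<phi> 0 * ?L) + \<phi> (2, 0) * ?L + \<phi> (- 2, 0) * ?L + \<phi> (0, 2) * ?L + \<phi> (0, - 2) * ?L
     + 2 * (\<phi> (1, - 1) * ?L) + 2 * (\<phi> (- 1, 1) * ?L) + 2 * (\<phi> (1, 1) * ?L) + 2 * (\<phi> (- 1, - 1) * ?L)"
    by (simp add: sum_S4 algebra_simps)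
  have f0: "\<phi> 0 * Lam r (a + 2, b) + \<phi> 0 * Lam r (a - 2, b) + \<phi> 0 * Lam r (a, b + 2) + \<phi> 0 * Lam r (a, b - 2) \<le> 4 * (\<phi> 0 * ?L)"
    using mult_left_mono[OF P0[OF r, of a b] ph[of 0]] by (simp add: algebra_simps)
  have f1: "\<phi> d * Lam r (a + 1, b + 1) + \<phi> d * Lam r (a - 1, b - 1) \<le> 2 * (\<phi> d * ?L)" for d
    using mult_left_mono[OF P1[OF r, of a b] ph[of d]] by (simp add: algebra_simps)
  have f2: "\<phi> d * Lam r (a + 1, b - 1) + \<phi> d * Lam r (a - 1, b + 1) \<le> 2 * (\<phi> d * ?L)" for d
    using mult_left_mono[OF P2[OF r, of a b] ph[of d]] by (simp add: algebra_simps)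
  have f3: "\<phi> d * Lam r (a, b) \<le> \<phi> d * ?L" for d
    using mult_left_mono[OF P3[OF r, of "(a,b)"] ph[of d]] .
  show ?thesis unfolding eqL eqR
    using f0 f1[of "(1,-1)"] f1[of "(-1,1)"] f2[of "(1,1)"] f2[of "(-1,-1)"]
      f3[of "(2,0)"] f3[of "(-2,0)"] f3[of "(0,2)"] f3[of "(0,-2)"] by linarith
qed

lemma sum_shift: "(x::int\<times>int) + s + (y + s') = x + y + (s + s')"
  by (simp add: ac_simps)

lemma key1:
  assumes t: "t \<ge> 0" and g: "\<And>z. g z \<ge> 0" and r: "r \<ge> 0"
  shows "T t (\<lambda>x y. g (x - y) * Lam r (x + y)) x y \<le> TD t g (x - y) * Lam (r+1) (x + y)"
proof -
  define \<phi> where "\<phi> d = (1 + t * (if x - y + d = 0 then 1 else 0)) * g (x - y + d)" for d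
  have ph: "\<phi> d \<ge> 0" for d unfolding \<phi>_def using t g by auto
  obtain a b where ab: "x + y = (a,b)" by (cases "x+y") auto
  have e1: "T t (\<lambda>x y. g (x - y) * Lam r (x + y)) x y
      = (\<Sum>s\<in>S4. \<Sum>s'\<in>S4. \<phi> (s - s') * Lam r ((a,b) + (s + s'))) / 16"
    unfolding T_def \<phi>_def ab[symmetric]
    by (intro arg_cong[where f="\<lambda>w. w / 16"] sum.cong refl)
       (simp only: eq_shift diff_shift sum_shift mult.assoc)
  have e2: "TD t g (x - y) = (\<Sum>s\<in>S4. \<Sum>s'\<in>S4. \<phi> (s - s')) / 16"
    unfolding TD_def \<phi>_def
    by (intro arg_cong[where f="\<lambda>w. w / 16"] sum.cong refl) (simp add: algebra_simps)
  show ?thesis unfolding e1 e2 ab using grouping[of \<phi> r a b, OF ph r] by (simp add: divide_right_mono)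
qed

lemma keyn:
  assumes t: "t \<ge> 0" and g: "\<And>z. g z \<ge> 0" and r: "r \<ge> 0"
  shows "(T t ^^ n) (\<lambda>x y. g (x - y) * Lam r (x + y)) x y \<le> (TD t ^^ n) g (x - y) * Lam (r + n) (x + y)"
proof (induction n arbitrary: x y)
  case 0 then show ?case by simp
next
  case (Suc n)
  have "(T t ^^ Suc n) (\<lambda>x y. g (x - y) * Lam r (x + y)) x y
      = T t ((T t ^^ n) (\<lambda>x y. g (x - y) * Lam r (x + y))) x y" by simp
  also have "\<dots> \<le> T t (\<lambda>x y. (TD t ^^ n) g (x - y) * Lam (r + n) (x + y)) x y"
    by (rule T_mono[OF t Suc])
  also have "\<dots> \<le> TD t ((TD t ^^ n) g) (x - y) * Lam (r + n + 1) (x + y)"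
    by (rule key1[OF t TDn_nonneg[OF t g]]) (use r in simp)
  finally show ?case by (simp add: ac_simps)
qed


definition hh :: "real \<Rightarrow> int\<times>int \<Rightarrow> int\<times>int \<Rightarrow> real" where "hh r x y = (n2 x + r) * (n2 y + r)"
definition CC :: "(int\<times>int \<Rightarrow> int\<times>int \<Rightarrow> real) \<Rightarrow> int\<times>int \<Rightarrow> int\<times>int \<Rightarrow> real" where
  "CC f x y = (\<Sum>s\<in>S4. \<Sum>s'\<in>S4. (if x + s = y + s' then 1 else 0) * f (x + s) (y + s')) / 16"

lemma n2_S4: "(\<Sum>s\<in>S4. n2 (x + s) + r) = 4 * (n2 x + r + 1)"
  by (cases x) (simp add: sum_S4 n2_def power2_eq_square algebra_simps)

lemma T_hh: "T t (hh r) x y = hh (r+1) x y + t * CC (hh r) x y"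
proof -
  have split: "(1 + t * (if x + s = y + s' then 1 else 0)) * hh r (x+s) (y+s')
      = hh r (x+s) (y+s') + t * ((if x + s = y + s' then 1 else 0) * hh r (x+s) (y+s'))" for s s'
    by (simp add: algebra_simps)
  have "T t (hh r) x y = (\<Sum>s\<in>S4. \<Sum>s'\<in>S4. hh r (x+s) (y+s'))/16 + t * CC (hh r) x y"
    unfolding T_def CC_def split
    by (simp only: sum.distrib sum_distrib_left[symmetric] add_divide_distrib times_divide_eq_right)
  also have "(\<Sum>s\<in>S4. \<Sum>s'\<in>S4. hh r (x+s) (y+s')) = (\<Sum>s\<in>S4. n2 (x + s) + r) * (\<Sum>s'\<in>S4. n2 (y + s') + r)"
    unfolding hh_def sum_product ..
  also have "\<dots> / 16 = hh (r+1) x y" unfolding n2_S4 hh_def by (simp add: algebra_simps)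
  finally show ?thesis .
qed

lemma hh_decomp: "(T t ^^ n) (hh r) x y = hh (r + n) x y + t * (\<Sum>j<n. (T t ^^ (n - Suc j)) (CC (hh (r + j))) x y)"
proof (induction n arbitrary: r x y)
  case 0 then show ?case by simp
next
  case (Suc n)
  have eq: "T t (hh r) = (\<lambda>x y. hh (r+1) x y + t * CC (hh r) x y)"
    by (intro ext) (rule T_hh)
  have "(T t ^^ Suc n) (hh r) x y = (T t ^^ n) (T t (hh r)) x y"
    by (simp only: funpow_Suc_right comp_def)
  also have "\<dots> = (T t ^^ n) (hh (r+1)) x y + t * (T t ^^ n) (CC (hh r)) x y"
    unfolding eq by (simp only: Tn_add Tn_cmult)
  also have "\<dots> = hh (r + 1 + n) x y + t * (\<Sum>j<n. (T t ^^ (n - Suc j)) (CC (hh (r + 1 + j))) x y)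
      + t * (T t ^^ n) (CC (hh r)) x y"
    using Suc.IH[of "r+1"] by simp
  also have "\<dots> = hh (r + Suc n) x y + t * (\<Sum>j<Suc n. (T t ^^ (Suc n - Suc j)) (CC (hh (r + j))) x y)"
    by (subst sum.lessThan_Suc_shift) (simp add: algebra_simps)
  finally show ?case .
qed

lemma n2_double: "n2 (w + w) = 4 * n2 w"
  by (simp add: n2_def power2_eq_square algebra_simps)

lemma R1_eq: "R 1 z = (\<Sum>s\<in>S4. \<Sum>s'\<in>S4. (if z + (s - s') = 0 then 1 else 0)) / 16"
  by (simp add: R.simps add_diff_eq)

lemma CC_bound:
  assumes r: "r \<ge> 0"
  shows "CC (hh r) x y \<le> R 1 (x - y) * (Lam (r+1) (x + y) / 16)"
proof -
  obtain a b where ab: "x + y = (a,b)" by (cases "x+y") auto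
  define \<phi> where "\<phi> d = (if x - y + d = 0 then 1 else 0::real)" for d
  have ph: "\<phi> d \<ge> 0" for d unfolding \<phi>_def by auto
  have tm: "(if x + s = y + s' then 1 else 0) * hh r (x+s) (y+s') \<le> \<phi> (s - s') * Lam r ((a,b) + (s + s')) / 16" for s s'
  proof (cases "x + s = y + s'")
    case True
    then have p1: "\<phi> (s - s') = 1" unfolding \<phi>_def by (simp add: eq_shift)
    have p2: "(a,b) + (s + s') = (x + s) + (x + s)" unfolding ab[symmetric] using True
      by (metis add.assoc add.commute)
    have "hh r (x+s) (y+s') = (n2 (x+s) + r)^2" using True by (simp add: hh_def power2_eq_square)
    also have "\<dots> \<le> (n2 (x+s) + 3*r)^2" using r n2_nonneg[of "x+s"] by (intro power_mono) auto
    also have "\<dots> = Lam r ((a,b) + (s + s')) / 16" unfolding p2 Lam_def n2_double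
      by (simp add: power2_eq_square algebra_simps)
    finally show ?thesis using True p1 by simp
  next
    case False
    then have "\<phi> (s - s') = 0" unfolding \<phi>_def by (simp add: eq_shift)
    then show ?thesis using False by simp
  qed
  have "CC (hh r) x y \<le> (\<Sum>s\<in>S4. \<Sum>s'\<in>S4. \<phi> (s - s') * Lam r ((a,b) + (s + s')) / 16) / 16"
    unfolding CC_def by (intro divide_right_mono sum_mono tm) auto
  also have "\<dots> = (\<Sum>s\<in>S4. \<Sum>s'\<in>S4. \<phi> (s - s') * Lam r ((a,b) + (s + s'))) / 16 / 16"
    by (simp add: sum_divide_distrib)
  also have "\<dots> \<le> (\<Sum>s\<in>S4. \<Sum>s'\<in>S4. \<phi> (s - s')) * Lam (r+1) (a,b) / 16 / 16"
    using grouping[of \<phi> r a b, OF ph r] by (simp add: divide_right_mono)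
  also have "(\<Sum>s\<in>S4. \<Sum>s'\<in>S4. \<phi> (s - s')) = 16 * R 1 (x - y)"
    unfolding R1_eq \<phi>_def by simp
  finally show ?thesis unfolding ab by simp
qed

lemma TD_add: "TD t (\<lambda>z. f z + g z) z = TD t f z + TD t g z"
  unfolding TD_def by (simp add: sum.distrib algebra_simps add_divide_distrib)

lemma TD_cmult: "TD t (\<lambda>z. c * f z) z = c * TD t f z"
  unfolding TD_def by (simp add: sum_distrib_left algebra_simps)

lemma TDn_add: "(TD t ^^ n) (\<lambda>z. f z + g z) = (\<lambda>z. (TD t ^^ n) f z + (TD t ^^ n) g z)"
proof (induction n)
  case (Suc n)
  show ?case by (rule ext) (simp add: Suc TD_add)
qed simp

lemma TDn_cmult: "(TD t ^^ n) (\<lambda>z. c * f z) = (\<lambda>z. c * (TD t ^^ n) f z)"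
proof (induction n)
  case (Suc n)
  show ?case by (rule ext) (simp add: Suc TD_cmult)
qed simp

lemma TD_one: "TD t (\<lambda>_. 1) z = 1 + t * R 1 z"
proof -
  have "TD t (\<lambda>_. 1) z = (\<Sum>s\<in>S4. \<Sum>s'\<in>S4. 1 + t * (if z + s - s' = 0 then 1 else 0)) / 16"
    unfolding TD_def by simp
  also have "\<dots> = 1 + t * ((\<Sum>s\<in>S4. \<Sum>s'\<in>S4. (if z + s - s' = 0 then 1 else 0)) / 16)"
    by (simp add: sum.distrib sum_distrib_left[symmetric] card_S4 add_divide_distrib)
  also have "(\<Sum>s\<in>S4. \<Sum>s'\<in>S4. (if z + s - s' = 0 then 1 else 0)) / 16 = R 1 z"
    by (simp add: R.simps)
  finally show ?thesis .
qed

lemma Aw_sum: "Aw t n z = 1 + t * (\<Sum>j<n. (TD t ^^ j) (R 1) z)"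
proof (induction n arbitrary: z)
  case 0 then show ?case by (simp add: Aw_def)
next
  case (Suc n)
  have "Aw t (Suc n) z = (TD t ^^ n) (TD t (\<lambda>_. 1)) z"
    unfolding Aw_def by (simp only: funpow_Suc_right comp_def)
  also have "TD t (\<lambda>_. 1) = (\<lambda>z. 1 + t * R 1 z)" by (intro ext) (rule TD_one)
  also have "(TD t ^^ n) (\<lambda>z. 1 + t * R 1 z) z = Aw t n z + t * (TD t ^^ n) (R 1) z"
    unfolding Aw_def by (simp only: TDn_add TDn_cmult)
  finally show ?case using Suc by (simp add: algebra_simps)
qed

lemma K_bound:
  assumes t: "t \<ge> 0"
  shows "(T t ^^ N) (\<lambda>x y. n2 x * n2 y) 0 0 \<le> (real N)^2 + 9 * (real N)^2 * (Aw t N 0 - 1)"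
proof -
  have h0: "(\<lambda>x y. n2 x * n2 y) = hh 0" by (intro ext) (simp add: hh_def)
  have step: "(T t ^^ (N - Suc j)) (CC (hh (real j))) 0 0 \<le> 9 * (real N)^2 * (TD t ^^ (N - Suc j)) (R 1) 0"
    if j: "j < N" for j
  proof -
    have "(T t ^^ (N - Suc j)) (CC (hh (real j))) 0 0
        \<le> (T t ^^ (N - Suc j)) (\<lambda>x y. (1/16) * (R 1 (x - y) * Lam (real j + 1) (x + y))) 0 0"
      by (rule Tn_mono[OF t]) (use CC_bound[of "real j"] in simp)
    also have "\<dots> = (1/16) * (T t ^^ (N - Suc j)) (\<lambda>x y. R 1 (x - y) * Lam (real j + 1) (x + y)) 0 0"
      by (simp only: Tn_cmult)
    also have "\<dots> \<le> (1/16) * ((TD t ^^ (N - Suc j)) (R 1) (0 - 0) * Lam (real j + 1 + real (N - Suc j)) (0 + 0))"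
      by (intro mult_left_mono keyn[OF t]) (auto simp: R_nonneg)
    also have "real j + 1 + real (N - Suc j) = real N" using j by simp
    also have "Lam (real N) (0 + 0) = 144 * (real N)^2" by (simp add: Lam_def n2_def power2_eq_square)
    finally show ?thesis by simp
  qed
  have "(T t ^^ N) (\<lambda>x y. n2 x * n2 y) 0 0 = hh (real N) 0 0 + t * (\<Sum>j<N. (T t ^^ (N - Suc j)) (CC (hh (real j))) 0 0)"
    unfolding h0 using hh_decomp[where t=t and n=N and r=0 and x=0 and y=0] by simp
  also have "hh (real N) 0 0 = (real N)^2" by (simp add: hh_def n2_def power2_eq_square)
  also have "t * (\<Sum>j<N. (T t ^^ (N - Suc j)) (CC (hh (real j))) 0 0) \<le> t * (\<Sum>j<N. 9 * (real N)^2 * (TD t ^^ (N - Suc j)) (R 1) 0)"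
    by (intro mult_left_mono sum_mono step t) auto
  also have "(\<Sum>j<N. 9 * (real N)^2 * (TD t ^^ (N - Suc j)) (R 1) 0) = 9 * (real N)^2 * (\<Sum>j<N. (TD t ^^ j) (R 1) 0)"
    using sum.nat_diff_reindex[where g="\<lambda>j. (TD t ^^ j) (R 1) 0" and n=N]
    by (simp add: sum_distrib_left[symmetric])
  also have "t * (9 * (real N)^2 * (\<Sum>j<N. (TD t ^^ j) (R 1) 0)) = 9 * (real N)^2 * (Aw t N 0 - 1)"
    using Aw_sum[of t N 0] by simp
  finally show ?thesis by simp
qed



lemma Qprod:
  fixes J :: "(nat \<times> (int\<times>int)) set" and \<phi> :: "nat \<times> (int\<times>int) \<Rightarrow> real \<Rightarrow> real"
  assumes fin: "finite J"
  shows "integrable Qenv (\<lambda>\<eta>. \<Prod>j\<in>J. \<phi> j (\<eta> j))"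
    and "(\<integral>\<eta>. (\<Prod>j\<in>J. \<phi> j (\<eta> j)) \<partial>Qenv) = (\<Prod>j\<in>J. (\<phi> j (-1) + \<phi> j 1) / 2)"
proof -
  let ?M = "\<lambda>_::nat \<times> (int\<times>int). measure_pmf (pmf_of_set {-1, 1::real})"
  interpret P: product_prob_space ?M UNIV
    by (intro product_prob_spaceI) (rule prob_space_measure_pmf)
  define F where "F \<xi> = (\<Prod>j\<in>J. \<phi> j (\<xi> j))" for \<xi> :: "nat \<times> (int\<times>int) \<Rightarrow> real"
  have measF: "F \<in> borel_measurable (PiM J ?M)"
    unfolding F_def
    by (intro borel_measurable_prod measurable_compose[OF measurable_component_singleton]) auto
  have restr: "(\<lambda>\<eta>. restrict \<eta> J) \<in> measurable (PiM UNIV ?M) (PiM J ?M)"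
    by (rule measurable_restrict_subset) simp
  have distr: "distr (PiM UNIV ?M) (PiM J ?M) (\<lambda>\<eta>. restrict \<eta> J) = PiM J ?M"
    by (rule P.distr_PiM_restrict_finite) (simp_all add: fin)
  have Fr: "F (restrict \<eta> J) = (\<Prod>j\<in>J. \<phi> j (\<eta> j))" for \<eta>
    unfolding F_def by (intro prod.cong) auto
  have intj: "integrable (?M j) (\<phi> j)" for j
    by (rule integrable_measure_pmf_finite) simp
  have intF: "integrable (PiM J ?M) F"
    unfolding F_def by (rule P.product_integrable_prod[OF fin intj])
  have "integrable (distr (PiM UNIV ?M) (PiM J ?M) (\<lambda>\<eta>. restrict \<eta> J)) F"
    unfolding distr by (rule intF)
  then have "integrable (PiM UNIV ?M) (\<lambda>\<eta>. F (restrict \<eta> J))"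
    using integrable_distr_eq[OF restr measF] by blast
  then show "integrable Qenv (\<lambda>\<eta>. \<Prod>j\<in>J. \<phi> j (\<eta> j))"
    unfolding Qenv_def Fr .
  have "(\<integral>\<eta>. F (restrict \<eta> J) \<partial>PiM UNIV ?M) = (\<integral>\<xi>. F \<xi> \<partial>PiM J ?M)"
    using integral_distr[OF restr measF] unfolding distr by simp
  also have "\<dots> = (\<Prod>j\<in>J. integral\<^sup>L (?M j) (\<phi> j))"
    unfolding F_def by (rule P.product_integral_prod[OF fin intj])
  also have "\<dots> = (\<Prod>j\<in>J. (\<phi> j (-1) + \<phi> j 1) / 2)"
    by (intro prod.cong refl) (simp add: integral_pmf_of_set)
  finally show "(\<integral>\<eta>. (\<Prod>j\<in>J. \<phi> j (\<eta> j)) \<partial>Qenv) = (\<Prod>j\<in>J. (\<phi> j (-1) + \<phi> j 1) / 2)"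
    unfolding Qenv_def Fr .
qed


lemma pair_int:
  fixes w w' :: "nat \<Rightarrow> int\<times>int" and c :: real
  shows "integrable Qenv (\<lambda>\<eta>. (\<Prod>n=1..N. 1 + c * \<eta> (n, w n)) * (\<Prod>n=1..N. 1 + c * \<eta> (n, w' n)))"
    and "(\<integral>\<eta>. (\<Prod>n=1..N. 1 + c * \<eta> (n, w n)) * (\<Prod>n=1..N. 1 + c * \<eta> (n, w' n)) \<partial>Qenv)
       = (\<Prod>n=1..N. 1 + c^2 * (if w n = w' n then 1 else 0))"
proof -
  define G where "G = (\<lambda>n. (n, w n)) ` {1..N}"
  define G' where "G' = (\<lambda>n. (n, w' n)) ` {1..N}"
  define J where "J = G \<union> G'"
  define I where "I = G \<inter> G'"
  define \<phi> where "\<phi> j u = (1 + c * u) * (if j \<in> I then 1 + c * u else 1)" for j and u :: real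
  have fG: "finite G" "finite G'" unfolding G_def G'_def by auto
  have fJ: "finite J" unfolding J_def using fG by auto
  have IJ: "J \<inter> I = I" unfolding I_def J_def by auto
  have e1: "(\<Prod>n=1..N. 1 + c * \<eta> (n, w n)) = (\<Prod>j\<in>G. 1 + c * \<eta> j)" for \<eta>
    unfolding G_def by (subst prod.reindex) (auto simp: inj_on_def)
  have e2: "(\<Prod>n=1..N. 1 + c * \<eta> (n, w' n)) = (\<Prod>j\<in>G'. 1 + c * \<eta> j)" for \<eta>
    unfolding G'_def by (subst prod.reindex) (auto simp: inj_on_def)
  have feq: "(\<Prod>n=1..N. 1 + c * \<eta> (n, w n)) * (\<Prod>n=1..N. 1 + c * \<eta> (n, w' n)) = (\<Prod>j\<in>J. \<phi> j (\<eta> j))" for \<eta>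
  proof -
    have "(\<Prod>n=1..N. 1 + c * \<eta> (n, w n)) * (\<Prod>n=1..N. 1 + c * \<eta> (n, w' n))
        = (\<Prod>j\<in>J. 1 + c * \<eta> j) * (\<Prod>j\<in>I. 1 + c * \<eta> j)"
      unfolding e1 e2 J_def I_def by (rule prod.union_inter[OF fG, symmetric])
    also have "(\<Prod>j\<in>I. 1 + c * \<eta> j) = (\<Prod>j\<in>J. if j \<in> I then 1 + c * \<eta> j else 1)"
      using prod.inter_restrict[OF fJ, of "\<lambda>j. 1 + c * \<eta> j" I] unfolding IJ .
    also have "(\<Prod>j\<in>J. 1 + c * \<eta> j) * \<dots> = (\<Prod>j\<in>J. \<phi> j (\<eta> j))"
      unfolding \<phi>_def by (rule prod.distrib[symmetric])
    finally show ?thesis .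
  qed
  show "integrable Qenv (\<lambda>\<eta>. (\<Prod>n=1..N. 1 + c * \<eta> (n, w n)) * (\<Prod>n=1..N. 1 + c * \<eta> (n, w' n)))"
    unfolding feq by (rule Qprod(1)[OF fJ])
  have "(\<integral>\<eta>. (\<Prod>n=1..N. 1 + c * \<eta> (n, w n)) * (\<Prod>n=1..N. 1 + c * \<eta> (n, w' n)) \<partial>Qenv)
      = (\<Prod>j\<in>J. (\<phi> j (-1) + \<phi> j 1) / 2)"
    unfolding feq by (rule Qprod(2)[OF fJ])
  also have "\<dots> = (\<Prod>j\<in>J. if j \<in> I then 1 + c^2 else 1)"
    by (intro prod.cong refl) (simp add: \<phi>_def power2_eq_square algebra_simps)
  also have "\<dots> = (\<Prod>j\<in>I. 1 + c^2)"
    using prod.inter_restrict[OF fJ, of "\<lambda>j. 1 + c^2" I] unfolding IJ by simp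
  also have "I = (\<lambda>n. (n, w n)) ` ({1..N} \<inter> {n. w n = w' n})"
    unfolding I_def G_def G'_def by auto
  also have "(\<Prod>j\<in>\<dots>. 1 + c^2) = (\<Prod>n\<in>{1..N} \<inter> {n. w n = w' n}. 1 + c^2)"
    by (subst prod.reindex) (auto simp: inj_on_def)
  also have "\<dots> = (\<Prod>n=1..N. 1 + c^2 * (if w n = w' n then 1 else 0))"
    by (subst prod.inter_restrict) (auto intro!: prod.cong)
  finally show "(\<integral>\<eta>. (\<Prod>n=1..N. 1 + c * \<eta> (n, w n)) * (\<Prod>n=1..N. 1 + c * \<eta> (n, w' n)) \<partial>Qenv)
       = (\<Prod>n=1..N. 1 + c^2 * (if w n = w' n then 1 else 0))" .
qed


definition wcons :: "int\<times>int \<Rightarrow> (nat \<Rightarrow> int\<times>int) \<Rightarrow> nat \<Rightarrow> nat \<Rightarrow> int\<times>int" where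
  "wcons s w N n = (if n = 0 then (0,0) else if n \<le> Suc N then s + w (n - 1) else (0,0))"

lemma unit_S4: "((a::int)^2 + b^2 = 1) \<longleftrightarrow> (a,b) \<in> S4"
proof
  assume h: "a^2 + b^2 = 1"
  have "0 \<le> a^2" "0 \<le> b^2" by simp_all
  then have "a^2 \<le> 1" "b^2 \<le> 1" using h by linarith+
  then have "\<bar>a\<bar> \<le> 1" "\<bar>b\<bar> \<le> 1" by (auto simp: abs_square_le_1)
  then have "a \<in> {-1,0,1}" "b \<in> {-1,0,1}" by auto
  then show "(a,b) \<in> S4" using h by (auto simp: S4_def)
next
  assume "(a,b) \<in> S4" then show "a^2 + b^2 = 1" by (auto simp: S4_def)
qed

lemma unit_S4': "((fst z)^2 + (snd z)^2 = 1) \<longleftrightarrow> z \<in> S4"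
  using unit_S4[of "fst z" "snd z"] by simp

lemma walks_0: "walks 0 = {\<lambda>_. (0,0)}"
  unfolding walks_def by (auto simp: fun_eq_iff) (metis neq0_conv)

lemma walks_Suc: "walks (Suc N) = (\<lambda>(s,w). wcons s w N) ` (S4 \<times> walks N)"
proof
  show "walks (Suc N) \<subseteq> (\<lambda>(s,w). wcons s w N) ` (S4 \<times> walks N)"
  proof
    fix v assume v: "v \<in> walks (Suc N)"
    have v0: "v 0 = (0,0)" and vs: "\<And>n. n \<in> {1..Suc N} \<Longrightarrow> (fst (v n) - fst (v (n-1)))^2 + (snd (v n) - snd (v (n-1)))^2 = 1"
      and vN: "\<And>n. n > Suc N \<Longrightarrow> v n = (0,0)" using v unfolding walks_def by auto
    define s where "s = v 1"
    define w where "w n = (if n \<le> N then v (Suc n) - v 1 else (0,0))" for n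
    have sS: "s \<in> S4" using vs[of 1] v0 unfolding s_def unit_S4'[symmetric] by simp
    have wW: "w \<in> walks N" unfolding walks_def
    proof (intro CollectI conjI ballI allI impI)
      show "w 0 = (0,0)" by (simp add: w_def zero_prod_def[symmetric])
    next
      fix n assume n: "n \<in> {1..N}"
      then have "w n = v (Suc n) - v 1" "w (n-1) = v n - v 1" by (auto simp: w_def)
      then show "(fst (w n) - fst (w (n-1)))^2 + (snd (w n) - snd (w (n-1)))^2 = 1"
        using vs[of "Suc n"] n by simp
    next
      fix n assume "n > N" then show "w n = (0,0)" by (simp add: w_def)
    qed
    have "v = wcons s w N"
    proof
      fix n
      show "v n = wcons s w N n"
      proof (cases "n = 0")
        case True then show ?thesis using v0 by (simp add: wcons_def)
      next
        case False
        show ?thesis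
        proof (cases "n \<le> Suc N")
          case True
          have "Suc (n - 1) = n" "n - 1 \<le> N" using False True by simp_all
          then have "w (n - 1) = v n - v 1" using False True by (simp add: w_def)
          then show ?thesis using False True by (simp add: wcons_def s_def)
        next
          case nle: False
          then show ?thesis using vN[of n] False by (simp add: wcons_def)
        qed
      qed
    qed
    then show "v \<in> (\<lambda>(s,w). wcons s w N) ` (S4 \<times> walks N)" using sS wW by auto
  qed
next
  show "(\<lambda>(s,w). wcons s w N) ` (S4 \<times> walks N) \<subseteq> walks (Suc N)"
  proof clarify
    fix s w assume sS: "s \<in> S4" and wW: "w \<in> walks N"
    have w0: "w 0 = (0,0)" and ws: "\<And>n. n \<in> {1..N} \<Longrightarrow> (fst (w n) - fst (w (n-1)))^2 + (snd (w n) - snd (w (n-1)))^2 = 1"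
      and wN: "\<And>n. n > N \<Longrightarrow> w n = (0,0)" using wW unfolding walks_def by auto
    show "wcons s w N \<in> walks (Suc N)" unfolding walks_def
    proof (intro CollectI conjI ballI allI impI)
      show "wcons s w N 0 = (0,0)" by (simp add: wcons_def)
    next
      fix n assume n: "n \<in> {1..Suc N}"
      show "(fst (wcons s w N n) - fst (wcons s w N (n-1)))^2 + (snd (wcons s w N n) - snd (wcons s w N (n-1)))^2 = 1"
      proof (cases "n = 1")
        case True
        then show ?thesis using sS w0 unit_S4'[of s] by (simp add: wcons_def)
      next
        case False
        then have "n - 1 \<in> {1..N}" "n - 1 - 1 = n - 2" using n by auto
        then show ?thesis using ws[of "n-1"] n False by (simp add: wcons_def)
      qed
    next
      fix n assume "n > Suc N" then show "wcons s w N n = (0,0)" by (simp add: wcons_def)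
    qed
  qed
qed

lemma wcons_inj: "inj_on (\<lambda>(s,w). wcons s w N) (S4 \<times> walks N)"
proof (rule inj_onI)
  fix p q assume p: "p \<in> S4 \<times> walks N" and q: "q \<in> S4 \<times> walks N"
    and e: "(\<lambda>(s,w). wcons s w N) p = (\<lambda>(s,w). wcons s w N) q"
  obtain s w where pp: "p = (s,w)" by (cases p)
  obtain s' w' where qq: "q = (s',w')" by (cases q)
  have w: "w \<in> walks N" and w': "w' \<in> walks N" using p q pp qq by auto
  have eq: "wcons s w N = wcons s' w' N" using e pp qq by simp
  have w0: "w 0 = (0,0)" "w' 0 = (0,0)" using w w' unfolding walks_def by auto
  have "wcons s w N 1 = wcons s' w' N 1" using eq by simp
  then have ss: "s = s'" using w0 by (simp add: wcons_def zero_prod_def[symmetric])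
  have "w = w'"
  proof
    fix n
    show "w n = w' n"
    proof (cases "n \<le> N")
      case True
      have "wcons s w N (Suc n) = wcons s' w' N (Suc n)" using eq by simp
      then show ?thesis using True ss by (simp add: wcons_def)
    next
      case False then show ?thesis using w w' unfolding walks_def by auto
    qed
  qed
  then show "p = q" using ss pp qq by simp
qed

lemma walks_finite: "finite (walks N)"
  by (induction N) (simp_all add: walks_0 walks_Suc S4_def)

lemma sum_walks_Suc: "(\<Sum>w\<in>walks (Suc N). F w) = (\<Sum>s\<in>S4. \<Sum>v\<in>walks N. F (wcons s v N))"
  unfolding walks_Suc by (simp add: sum.reindex[OF wcons_inj] sum.cartesian_product prod.case_distrib)

lemma prod_wcons:
  assumes v: "v \<in> walks N" and v': "v' \<in> walks N"
  shows "(\<Prod>n=1..Suc N. 1 + t * (if x + wcons s v N n = y + wcons s' v' N n then 1 else 0))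
    = (1 + t * (if x + s = y + s' then 1 else 0)) * (\<Prod>n=1..N. 1 + t * (if (x + s) + v n = (y + s') + v' n then 1 else 0))"
proof -
  have v0: "v 0 = 0" "v' 0 = 0" using v v' unfolding walks_def by (auto simp: zero_prod_def)
  have "(\<Prod>n=1..Suc N. 1 + t * (if x + wcons s v N n = y + wcons s' v' N n then 1 else 0))
     = (1 + t * (if x + wcons s v N 1 = y + wcons s' v' N 1 then 1 else 0))
       * (\<Prod>n=Suc 1..Suc N. 1 + t * (if x + wcons s v N n = y + wcons s' v' N n then 1 else 0))"
    by (rule prod.atLeast_Suc_atMost) simp
  also have "(\<Prod>n=Suc 1..Suc N. 1 + t * (if x + wcons s v N n = y + wcons s' v' N n then 1 else 0))
     = (\<Prod>n=1..N. 1 + t * (if x + wcons s v N (Suc n) = y + wcons s' v' N (Suc n) then 1 else 0))"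
    by (rule prod.shift_bounds_cl_Suc_ivl)
  also have "\<dots> = (\<Prod>n=1..N. 1 + t * (if (x + s) + v n = (y + s') + v' n then 1 else 0))"
    by (intro prod.cong refl) (simp add: wcons_def add.assoc)
  finally show ?thesis using v0 by (simp add: wcons_def)
qed

lemma sum2_div: "(\<Sum>s\<in>A. \<Sum>s'\<in>B. (F s s'::real) * (G s s' / c)) = (\<Sum>s\<in>A. \<Sum>s'\<in>B. F s s' * G s s') / c"
  by (simp add: sum_divide_distrib)

lemma bridge:
  "(\<Sum>w\<in>walks N. \<Sum>w'\<in>walks N. (\<Prod>n=1..N. 1 + t * (if x + w n = y + w' n then 1 else 0)) * f (x + w N) (y + w' N)) / 16^N
    = (T t ^^ N) f x y"
proof (induction N arbitrary: x y)
  case 0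
  then show ?case by (simp add: walks_0 zero_prod_def[symmetric])
next
  case (Suc N)
  let ?I = "\<lambda>x y s s'. (1 + t * (if x + s = y + s' then 1 else 0))"
  let ?G = "\<lambda>x y. (\<Sum>v\<in>walks N. \<Sum>v'\<in>walks N. (\<Prod>n=1..N. 1 + t * (if x + v n = y + v' n then 1 else 0)) * f (x + v N) (y + v' N))"
  have wN: "wcons s v N (Suc N) = s + v N" for s v by (simp add: wcons_def)
  have "(\<Sum>w\<in>walks (Suc N). \<Sum>w'\<in>walks (Suc N). (\<Prod>n=1..Suc N. 1 + t * (if x + w n = y + w' n then 1 else 0)) * f (x + w (Suc N)) (y + w' (Suc N)))
    = (\<Sum>s\<in>S4. \<Sum>v\<in>walks N. \<Sum>s'\<in>S4. \<Sum>v'\<in>walks N. ?I x y s s' * ((\<Prod>n=1..N. 1 + t * (if (x + s) + v n = (y + s') + v' n then 1 else 0)) * f ((x + s) + v N) ((y + s') + v' N)))"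
    unfolding sum_walks_Suc
  proof (intro sum.cong refl, goal_cases)
    case (1 s v s' v')
    show ?case unfolding prod_wcons[OF 1(2) 1(4)] by (simp add: wN add.assoc mult.assoc)
  qed
  also have "\<dots> = (\<Sum>s\<in>S4. \<Sum>s'\<in>S4. ?I x y s s' * ?G (x + s) (y + s'))"
    by (simp add: sum_distrib_left sum.swap[of _ "walks N" S4])
  finally have A: "(\<Sum>w\<in>walks (Suc N). \<Sum>w'\<in>walks (Suc N). (\<Prod>n=1..Suc N. 1 + t * (if x + w n = y + w' n then 1 else 0)) * f (x + w (Suc N)) (y + w' (Suc N)))
      = (\<Sum>s\<in>S4. \<Sum>s'\<in>S4. ?I x y s s' * ?G (x + s) (y + s'))" .
  have B: "(\<Sum>s\<in>S4. \<Sum>s'\<in>S4. ?I x y s s' * (?G (x + s) (y + s') / 16^N))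
      = (\<Sum>s\<in>S4. \<Sum>s'\<in>S4. ?I x y s s' * ?G (x + s) (y + s')) / 16^N"
    by (rule sum2_div)
  have "(\<Sum>w\<in>walks (Suc N). \<Sum>w'\<in>walks (Suc N). (\<Prod>n=1..Suc N. 1 + t * (if x + w n = y + w' n then 1 else 0)) * f (x + w (Suc N)) (y + w' (Suc N))) / 16 ^ Suc N
      = (\<Sum>s\<in>S4. \<Sum>s'\<in>S4. ?I x y s s' * (?G (x + s) (y + s') / 16^N)) / 16"
    unfolding A B by (simp add: power_Suc divide_divide_eq_left mult.commute)
  also have "\<dots> = T t ((T t ^^ N) f) x y" unfolding Suc T_def ..
  finally show ?case by simp
qed


lemma Esq:
  fixes h :: "(nat \<Rightarrow> int\<times>int) \<Rightarrow> real" and a :: real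
  shows "(\<integral>\<eta>. (\<Sum>w\<in>walks N. (\<Prod>n=1..N. 1 + a * \<eta> (n, w n)) * h w / 4^N)^2 \<partial>Qenv)
    = (\<Sum>w\<in>walks N. \<Sum>w'\<in>walks N. (\<Prod>n=1..N. 1 + a^2 * (if w n = w' n then 1 else 0)) * (h w * h w')) / 16^N"
proof -
  let ?P = "\<lambda>w \<eta>. (\<Prod>n=1..N. 1 + a * \<eta> (n, w n))"
  have p16: "(4::real)^N * 4^N = 16^N" by (simp add: power_mult_distrib[symmetric])
  have sq: "(\<Sum>w\<in>walks N. ?P w \<eta> * h w / 4^N)^2
      = (\<Sum>w\<in>walks N. \<Sum>w'\<in>walks N. (h w * h w' / 16^N) * (?P w \<eta> * ?P w' \<eta>))" for \<eta>
    unfolding power2_eq_square sum_product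
    by (intro sum.cong refl) (simp add: p16[symmetric] field_simps)
  have "(\<integral>\<eta>. (\<Sum>w\<in>walks N. ?P w \<eta> * h w / 4^N)^2 \<partial>Qenv)
      = (\<integral>\<eta>. (\<Sum>w\<in>walks N. \<Sum>w'\<in>walks N. (h w * h w' / 16^N) * (?P w \<eta> * ?P w' \<eta>)) \<partial>Qenv)"
    unfolding sq ..
  also have "\<dots> = (\<Sum>w\<in>walks N. \<Sum>w'\<in>walks N. (h w * h w' / 16^N) * (\<integral>\<eta>. ?P w \<eta> * ?P w' \<eta> \<partial>Qenv))"
    using pair_int(1)[where N=N and c=a] by (simp add: integral_sum)
  also have "\<dots> = (\<Sum>w\<in>walks N. \<Sum>w'\<in>walks N. (h w * h w' / 16^N) * (\<Prod>n=1..N. 1 + a^2 * (if w n = w' n then 1 else 0)))"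
    by (simp only: pair_int(2))
  also have "\<dots> = (\<Sum>w\<in>walks N. \<Sum>w'\<in>walks N. (\<Prod>n=1..N. 1 + a^2 * (if w n = w' n then 1 else 0)) * (h w * h w')) / 16^N"
    by (simp add: sum_divide_distrib algebra_simps)
  finally show ?thesis .
qed

lemma EZ: "(\<integral>\<eta>. (Zpart c N \<eta>)^2 \<partial>Qenv) = Aw ((c N)^2) N 0"
proof -
  have "Zpart c N \<eta> = (\<Sum>w\<in>walks N. (\<Prod>n=1..N. 1 + c N * \<eta> (n, w n)) * (\<lambda>_. 1) w / 4^N)" for \<eta>
    unfolding Zpart_def by simp
  then have "(\<integral>\<eta>. (Zpart c N \<eta>)^2 \<partial>Qenv)
     = (\<Sum>w\<in>walks N. \<Sum>w'\<in>walks N. (\<Prod>n=1..N. 1 + (c N)^2 * (if w n = w' n then 1 else 0)) * ((\<lambda>_. 1) w * (\<lambda>_. 1) w')) / 16^N"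
    by (simp only: Esq)
  also have "\<dots> = (T ((c N)^2) ^^ N) (\<lambda>x y. (\<lambda>_. 1) (x - y)) 0 0"
    using bridge[where N=N and t="(c N)^2" and x=0 and y=0 and f="\<lambda>x y. (\<lambda>_. 1) (x - y)"] by simp
  also have "\<dots> = Aw ((c N)^2) N 0" using Tn_D[where g="\<lambda>_. 1" and t="(c N)^2" and n=N] by (simp add: Aw_def)
  finally show ?thesis .
qed

lemma EK: "(\<integral>\<eta>. (Kpart c N \<eta>)^2 \<partial>Qenv) = (T ((c N)^2) ^^ N) (\<lambda>x y. n2 x * n2 y) 0 0"
proof -
  have "Kpart c N \<eta> = (\<Sum>w\<in>walks N. (\<Prod>n=1..N. 1 + c N * \<eta> (n, w n)) * (\<lambda>w. n2 (w N)) w / 4^N)" for \<eta>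
    unfolding Kpart_def n2_def by simp
  then have "(\<integral>\<eta>. (Kpart c N \<eta>)^2 \<partial>Qenv)
     = (\<Sum>w\<in>walks N. \<Sum>w'\<in>walks N. (\<Prod>n=1..N. 1 + (c N)^2 * (if w n = w' n then 1 else 0)) * ((\<lambda>w. n2 (w N)) w * (\<lambda>w. n2 (w N)) w')) / 16^N"
    by (simp only: Esq)
  also have "\<dots> = (T ((c N)^2) ^^ N) (\<lambda>x y. n2 x * n2 y) 0 0"
    using bridge[where N=N and t="(c N)^2" and x=0 and y=0 and f="\<lambda>x y. n2 x * n2 y"] by simp
  finally show ?thesis .
qed


lemma geo9: "(x::real) \<ge> 0 \<Longrightarrow> 1 + 9 * ((\<Sum>k\<le>n. x^k) - 1) \<le> (\<Sum>k\<le>n. (9*x)^k)"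
proof (induction n)
  case 0 then show ?case by simp
next
  case (Suc n)
  have "9 * x^Suc n \<le> 9^Suc n * x^Suc n"
    using Suc.prems by (intro mult_right_mono) (auto simp: one_le_power)
  then show ?case using Suc by (simp add: power_mult_distrib algebra_simps)
qed

lemma geo_mono: "0 \<le> (x::real) \<Longrightarrow> x \<le> y \<Longrightarrow> (\<Sum>k\<le>n. x^k) \<le> (\<Sum>k\<le>n. y^k)"
  by (intro sum_mono power_mono) auto

lemma ln2_ge: "ln (2::real) \<ge> 1/2"
proof -
  have "ln (1/2::real) \<le> 1/2 - 1" by (rule ln_le_minus_one) simp
  moreover have "ln (1/2::real) = - ln 2" by (simp add: ln_div)
  ultimately show ?thesis by simp
qed

lemma H_bound:
  assumes N: "N \<ge> 2"
  shows "(\<Sum>m<N. 1/(real m+1)) \<le> 3 * ln (real N)"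
proof -
  have "(\<Sum>m<N. 1/(real m+1)) = (harm N :: real)"
    unfolding harm_altdef by (simp add: divide_inverse add.commute)
  also have "\<dots> \<le> 1 + ln (real N)"
    using euler_mascheroni_sequence_decreasing[of 1 N] N by (simp add: harm_def)
  also have "\<dots> \<le> 3 * ln (real N)"
  proof -
    have "ln 2 \<le> ln (real N)" using N by simp
    then show ?thesis using ln2_ge by linarith
  qed
  finally show ?thesis .
qed

theorem proposition2:
  shows "\<exists>c2::real. c2 > 0 \<and>
    (\<forall>c::nat \<Rightarrow> real. (\<forall>N. c N > 0) \<longrightarrow> ((\<lambda>N. (c N)^2 * ln (real N)) \<longlonglongrightarrow> 0) \<longrightarrow>
      (\<forall>N::nat. N \<ge> 2 \<longrightarrow>
         (\<integral>eta. (Zpart c N eta)^2 \<partial>Qenv) \<le> (\<Sum>n=0..N. (c2 * (c N)^2 * ln (real N))^n)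
       \<and> (\<integral>eta. (Kpart c N eta)^2 \<partial>Qenv) \<le> (real N)^2 * (\<Sum>n=0..N. (c2 * (c N)^2 * ln (real N))^n)))"
proof (intro exI[of _ 27] conjI allI impI)
  show "(0::real) < 27" by simp
next
  fix c :: "nat \<Rightarrow> real" and N :: nat
  assume N: "N \<ge> 2"
  define t where "t = (c N)^2"
  define H where "H = (\<Sum>m<N. 1/(real m+1))"
  define y where "y = 27 * (c N)^2 * ln (real N)"
  have t0: "t \<ge> 0" unfolding t_def by simp
  have H0: "H \<ge> 0" unfolding H_def by (auto intro: sum_nonneg)
  have HB: "H \<le> 3 * ln (real N)" unfolding H_def by (rule H_bound[OF N])
  have x0: "t * H \<ge> 0" using t0 H0 by simp
  have xy: "9 * (t * H) \<le> y"
  proof -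
    have "t * H \<le> t * (3 * ln (real N))" using HB t0 by (rule mult_left_mono)
    then show ?thesis unfolding y_def t_def by (simp add: algebra_simps)
  qed
  have xy1: "t * H \<le> y" using xy x0 by linarith
  have A: "Aw t N 0 \<le> (\<Sum>k\<le>N. (t*H)^k)" unfolding H_def by (rule Aw_bound[OF t0 le_refl])
  have S: "(\<Sum>n=0..N. y^n) = (\<Sum>k\<le>N. y^k)" by (simp add: atLeast0AtMost)
  show "(\<integral>eta. (Zpart c N eta)^2 \<partial>Qenv) \<le> (\<Sum>n=0..N. (27 * (c N)^2 * ln (real N))^n)"
  proof -
    have "(\<integral>eta. (Zpart c N eta)^2 \<partial>Qenv) = Aw t N 0" unfolding t_def by (rule EZ)
    also have "\<dots> \<le> (\<Sum>k\<le>N. (t*H)^k)" by (rule A)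
    also have "\<dots> \<le> (\<Sum>k\<le>N. y^k)" by (rule geo_mono[OF x0 xy1])
    finally show ?thesis unfolding y_def by (simp add: atLeast0AtMost)
  qed
  show "(\<integral>eta. (Kpart c N eta)^2 \<partial>Qenv) \<le> (real N)^2 * (\<Sum>n=0..N. (27 * (c N)^2 * ln (real N))^n)"
  proof -
    have "(\<integral>eta. (Kpart c N eta)^2 \<partial>Qenv) = (T t ^^ N) (\<lambda>x y. n2 x * n2 y) 0 0"
      unfolding t_def by (rule EK)
    also have "\<dots> \<le> (real N)^2 + 9 * (real N)^2 * (Aw t N 0 - 1)" by (rule K_bound[OF t0])
    also have "\<dots> \<le> (real N)^2 + 9 * (real N)^2 * ((\<Sum>k\<le>N. (t*H)^k) - 1)"
      using A by (intro add_left_mono mult_left_mono) auto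
    also have "\<dots> = (real N)^2 * (1 + 9 * ((\<Sum>k\<le>N. (t*H)^k) - 1))" by (simp add: algebra_simps)
    also have "\<dots> \<le> (real N)^2 * (\<Sum>k\<le>N. (9*(t*H))^k)"
      by (intro mult_left_mono geo9 x0) simp
    also have "\<dots> \<le> (real N)^2 * (\<Sum>k\<le>N. y^k)"
      using x0 by (intro mult_left_mono geo_mono xy) auto
    finally show ?thesis unfolding y_def by (simp add: atLeast0AtMost)
  qed
qed


end
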